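(* Let $n\ge 2$ be even. In the cover $C_n\to F_n$, the only points of $F_n$ that can be branched are the points $(X:Y:Z)$ of $F_n$ with $Z=0$ (the $n$ cusps lying above $\infty$), and their ramification indices are at most $2$.
   Context: Let $a=\begin{pmatrix}1&2\\0&1\end{pmatrix}$, $b=\begin{pmatrix}1&0\\2&1\end{pmatrix}$, $\Delta=\langle a,b\rangle\subset\mathrm{SL}(2,\mathbb{Z})$, free of rank 2, with $\Delta\backslash\mathbb{H}\cong\mathbb{P}^1-\{0,1,\infty\}$. $H_n$ is the Heisenberg group of upper unitriangular $3\times3$ matrices over $\mathbb{Z}/n\mathbb{Z}$, generated by $a_H=I+E_{12}$, $b_H=I+E_{23}$, with center $Z_n\cong\mathbb{Z}/n\mathbb{Z}$. $\phi:\Delta\to H_n$ is $a\mapsto a_H,b\mapsto b_H$ and $\psi:\Delta\to(\mathbb{Z}/n\mathbb{Z})^2$ is $a\mapsto(1,0),b\mapsto(0,1)$. $C_n$ (Heisenberg curve) and $F_n$ (Fermat curve) are the compactifications by cusps of $\ker\phi\backslash\mathbb{H}$ and $\ker\psi\backslash\mathbb{H}$; $C_n\to F_n$ is Galois with group $Z_n$. $F_n$ is identified with the projective curve $X^n+Y^n=Z^n$, on which the deck group $(\mathbb{Z}/n\mathbb{Z})^2$ of $F_n\to\mathbb{P}^1$ acts by $\sigma_{i,j}:(X:Y:Z)\mapsto(\zeta^iX:\zeta^jY:Z)$, $\zeta=e^{2\pi i/n}$, the quotient map being $(X:Y:Z)\mapsto (X/Z)^n$; the cusps of $F_n$ are the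 $3n$ points with $XYZ=0$, lying above $0$ ($X=0$), $1$ ($Y=0$) and $\infty$ ($Z=0$). *)

theory Defs
  imports Complex_Main
begin

datatype m2 = M int int int int

fun mmult :: "m2 \<Rightarrow> m2 \<Rightarrow> m2" where
  "mmult (M a b c d) (M a' b' c' d') =
     M (a*a' + b*c') (a*b' + b*d') (c*a' + d*c') (c*b' + d*d')"

definition mI :: m2 where "mI = M 1 0 0 1"

text \<open>Points of H* = H \<union> P^1(Q): interior points, rational cusps, and the cusp at infinity.\<close>
datatype hpt = Pt complex | Cusp rat | InfC

definition Hstar :: "hpt set" where
  "Hstar = {Pt z | z. Im z > 0} \<union> range Cusp \<union> {InfC}"

fun act :: "m2 \<Rightarrow> hpt \<Rightarrow> hpt" where
  "act (M a b c d) (Pt z) =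
     Pt ((of_int a * z + of_int b) / (of_int c * z + of_int d))"
| "act (M a b c d) (Cusp q) =
     (if of_int c * q + of_int d = 0 then InfC
      else Cusp ((of_int a * q + of_int b) / (of_int c * q + of_int d)))"
| "act (M a b c d) InfC = (if c = 0 then InfC else Cusp (of_int a / of_int c))"

text \<open>A letter is (is the generator a?, positive exponent?).\<close>
type_synonym letter = "bool \<times> bool"

fun gen :: "letter \<Rightarrow> m2" where
  "gen (True, True) = M 1 2 0 1"
| "gen (True, False) = M 1 (-2) 0 1"
| "gen (False, True) = M 1 0 2 1"
| "gen (False, False) = M 1 0 (-2) 1"

fun eval_mat :: "letter list \<Rightarrow> m2" where
  "eval_mat [] = mI"
| "eval_mat (l # w) = mmult (gen l) (eval_mat w)"

text \<open>Integer Heisenberg group: (x,y,z) stands for I + x E12 + y E23 + z E13.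
  Reduction mod n gives H_n.\<close>
fun hmult :: "int \<times> int \<times> int \<Rightarrow> int \<times> int \<times> int \<Rightarrow> int \<times> int \<times> int" where
  "hmult (x, y, z) (x', y', z') = (x + x', y + y', z + z' + x * y')"

fun genH :: "letter \<Rightarrow> int \<times> int \<times> int" where
  "genH (True, True) = (1, 0, 0)"
| "genH (True, False) = (-1, 0, 0)"
| "genH (False, True) = (0, 1, 0)"
| "genH (False, False) = (0, -1, 0)"

fun eval_H :: "letter list \<Rightarrow> int \<times> int \<times> int" where
  "eval_H [] = (0, 0, 0)"
| "eval_H (l # w) = hmult (genH l) (eval_H w)"

definition Delta :: "m2 set" where
  "Delta = range eval_mat"

definition ker_phi :: "nat \<Rightarrow> m2 set" where
  "ker_phi n = {eval_mat w | w. (case eval_H w of (x, y, z) \<Rightarrow>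
       x mod int n = 0 \<and> y mod int n = 0 \<and> z mod int n = 0)}"

text \<open>ker psi: words whose image in (Z/nZ)^2 (exponent sums of a and b) is 0.\<close>
definition ker_psi :: "nat \<Rightarrow> m2 set" where
  "ker_psi n = {eval_mat w | w. (case eval_H w of (x, y, z) \<Rightarrow>
       x mod int n = 0 \<and> y mod int n = 0)}"

definition stab :: "m2 set \<Rightarrow> hpt \<Rightarrow> m2 set" where
  "stab G x = {g \<in> G. act g x = x}"

text \<open>Left cosets of Stab_{G1}(x) in Stab_{G2}(x). Their number is the ramification index
  at the point G1 x of the map G1\<bsl>H* \<rightarrow> G2\<bsl>H* (no group here contains -I).\<close>
definition ram_cosets :: "m2 set \<Rightarrow> m2 set \<Rightarrow> hpt \<Rightarrow> m2 set set" where
  "ram_cosets G1 G2 x = {(\<lambda>h. mmult g h) ` stab G1 x | g. g \<in> stab G2 x}"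

definition ram_index :: "m2 set \<Rightarrow> m2 set \<Rightarrow> hpt \<Rightarrow> nat" where
  "ram_index G1 G2 x = card (ram_cosets G1 G2 x)"

text \<open>The points of F_n = ker psi\<bsl>H* with Z = 0 (the n cusps over infinity) are the
  ker psi-orbits of cusps in the Delta-orbit of the cusp 1.\<close>
definition Fermat_Z0_cusps :: "hpt set" where
  "Fermat_Z0_cusps = {act g (Cusp 1) | g. g \<in> Delta}"

end

theory Submission
  imports Defs
begin


lemma mmult_assoc: "mmult (mmult A B) C = mmult A (mmult B C)"
  by (cases A; cases B; cases C) (simp add: algebra_simps)

lemma mmult_mI_left[simp]: "mmult mI A = A" by (cases A) (simp add: mI_def)
lemma mmult_mI_right[simp]: "mmult A mI = A" by (cases A) (simp add: mI_def)

lemma hmult_assoc: "hmult (hmult A B) C = hmult A (hmult B C)"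
  by (cases A; cases B; cases C) (simp add: algebra_simps)

lemma hmult_0_left[simp]: "hmult (0,0,0) A = A" by (cases A) simp
lemma hmult_0_right[simp]: "hmult A (0,0,0) = A" by (cases A) simp

fun linv :: "letter \<Rightarrow> letter" where "linv (x, s) = (x, \<not> s)"

lemma linv_linv[simp]: "linv (linv l) = l" by (cases l) simp

lemma gen_linv: "mmult (gen l) (gen (linv l)) = mI"
  by (cases l rule: gen.cases) (simp_all add: mI_def)

lemma genH_linv: "hmult (genH l) (genH (linv l)) = (0,0,0)"
  by (cases l rule: genH.cases) simp_all

lemma eval_mat_append: "eval_mat (u @ v) = mmult (eval_mat u) (eval_mat v)"
  by (induction u) (simp_all add: mmult_assoc)

lemma eval_H_append: "eval_H (u @ v) = hmult (eval_H u) (eval_H v)"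
  by (induction u) (simp_all add: hmult_assoc)

definition winv :: "letter list \<Rightarrow> letter list" where
  "winv w = rev (map linv w)"

lemma winv_winv[simp]: "winv (winv w) = w"
  by (simp add: winv_def rev_map comp_def)

lemma eval_mat_winv_left: "eval_mat (winv w @ w) = mI"
proof (induction w)
  case Nil thus ?case by (simp add: winv_def)
next
  case (Cons l w)
  have "eval_mat (winv (l # w) @ l # w) =
        mmult (eval_mat (winv w)) (mmult (mmult (gen (linv l)) (gen l)) (eval_mat w))"
    by (simp add: winv_def eval_mat_append mmult_assoc)
  also have "mmult (gen (linv l)) (gen l) = mI" using gen_linv[of "linv l"] by simp
  finally show ?case using Cons by (simp add: eval_mat_append)
qed

lemma eval_mat_winv_right: "eval_mat (w @ winv w) = mI"
  using eval_mat_winv_left[of "winv w"] by simp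

lemma eval_H_winv_left: "eval_H (winv w @ w) = (0,0,0)"
proof (induction w)
  case Nil thus ?case by (simp add: winv_def)
next
  case (Cons l w)
  have "eval_H (winv (l # w) @ l # w) =
        hmult (eval_H (winv w)) (hmult (hmult (genH (linv l)) (genH l)) (eval_H w))"
    by (simp add: winv_def eval_H_append hmult_assoc)
  also have "hmult (genH (linv l)) (genH l) = (0,0,0)" using genH_linv[of "linv l"] by simp
  finally show ?case using Cons by (simp add: eval_H_append)
qed

lemma eval_H_winv_right: "eval_H (w @ winv w) = (0,0,0)"
  using eval_H_winv_left[of "winv w"] by simp

fun reduced :: "letter list \<Rightarrow> bool" where
  "reduced (l # l' # w) = (l' \<noteq> linv l \<and> reduced (l' # w))"
| "reduced _ = True"

lemma reduced_tl: "reduced (l # w) \<Longrightarrow> reduced w"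
  by (cases w) auto

fun red :: "letter list \<Rightarrow> letter list" where
  "red [] = []"
| "red (l # w) = (case red w of [] \<Rightarrow> [l]
      | l' # w' \<Rightarrow> if l' = linv l then w' else l # l' # w')"

lemma reduced_red: "reduced (red w)"
  by (induction w) (auto split: list.splits dest: reduced_tl)

lemma eval_mat_red: "eval_mat (red w) = eval_mat w"
proof (induction w)
  case Nil thus ?case by simp
next
  case (Cons l w)
  show ?case
  proof (cases "red w")
    case Nil thus ?thesis using Cons by (simp add: mI_def[symmetric])
  next
    case (Cons l' w')
    show ?thesis
    proof (cases "l' = linv l")
      case True
      have "eval_mat w = mmult (gen (linv l)) (eval_mat w')"
        using Cons `eval_mat (red w) = eval_mat w` True by simp
      hence "eval_mat (l # w) = mmult (mmult (gen l) (gen (linv l))) (eval_mat w')"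
        by (simp add: mmult_assoc)
      thus ?thesis using Cons True by (simp add: gen_linv)
    next
      case False thus ?thesis using Cons `eval_mat (red w) = eval_mat w` by simp
    qed
  qed
qed

lemma eval_H_red: "eval_H (red w) = eval_H w"
proof (induction w)
  case Nil thus ?case by simp
next
  case (Cons l w)
  show ?case
  proof (cases "red w")
    case Nil thus ?thesis using Cons by simp
  next
    case (Cons l' w')
    show ?thesis
    proof (cases "l' = linv l")
      case True
      have "eval_H w = hmult (genH (linv l)) (eval_H w')"
        using Cons `eval_H (red w) = eval_H w` True by simp
      hence "eval_H (l # w) = hmult (hmult (genH l) (genH (linv l))) (eval_H w')"
        by (simp add: hmult_assoc)
      thus ?thesis using Cons True by (simp add: genH_linv)
    next
      case False thus ?thesis using Cons `eval_H (red w) = eval_H w` by simp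
    qed
  qed
qed



fun mv :: "m2 \<Rightarrow> int \<times> int \<Rightarrow> int \<times> int" where
  "mv (M a b c d) (x, y) = (a*x + b*y, c*x + d*y)"

lemma mv_mmult: "mv (mmult A B) v = mv A (mv B v)"
  by (cases A; cases B; cases v) (simp add: algebra_simps)

lemma mv_mI[simp]: "mv mI v = v" by (cases v) (simp add: mI_def)

fun region :: "letter \<Rightarrow> (int \<times> int) set" where
  "region (True, True) = {(x,y). \<bar>x\<bar> > \<bar>y\<bar> \<and> ((x \<ge> 0 \<and> y \<ge> 0) \<or> (x \<le> 0 \<and> y \<le> 0))}"
| "region (True, False) = {(x,y). \<bar>x\<bar> > \<bar>y\<bar> \<and> ((x \<ge> 0 \<and> y \<le> 0) \<or> (x \<le> 0 \<and> y \<ge> 0))}"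
| "region (False, True) = {(x,y). \<bar>y\<bar> > \<bar>x\<bar> \<and> ((x \<ge> 0 \<and> y \<ge> 0) \<or> (x \<le> 0 \<and> y \<le> 0))}"
| "region (False, False) = {(x,y). \<bar>y\<bar> > \<bar>x\<bar> \<and> ((x \<ge> 0 \<and> y \<le> 0) \<or> (x \<le> 0 \<and> y \<ge> 0))}"

fun pdom :: "letter \<Rightarrow> (int \<times> int) set" where
  "pdom (True, _) = {(x,y). \<bar>x\<bar> < \<bar>y\<bar>}"
| "pdom (False, _) = {(x,y). \<bar>y\<bar> < \<bar>x\<bar>}"

lemma gen_maps: "v \<in> pdom l \<or> v \<in> region l \<Longrightarrow> mv (gen l) v \<in> region l"
proof -
  assume h: "v \<in> pdom l \<or> v \<in> region l"
  obtain x y where v: "v = (x, y)" by fastforce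
  show ?thesis
  proof (cases l rule: gen.cases)
    case 1 thus ?thesis using h v by (simp add: abs_if split: if_splits) arith+
  next
    case 2 thus ?thesis using h v by (simp add: abs_if split: if_splits) arith+
  next
    case 3 thus ?thesis using h v by (simp add: abs_if split: if_splits) arith+
  next
    case 4 thus ?thesis using h v by (simp add: abs_if split: if_splits) arith+
  qed
qed

lemma region_sub: "fst l \<noteq> fst l' \<Longrightarrow> region l' \<subseteq> pdom l"
  by (cases l rule: gen.cases; cases l' rule: gen.cases) auto

lemma pingpong: "reduced w \<Longrightarrow> w \<noteq> [] \<Longrightarrow> v \<in> pdom (last w) \<Longrightarrow>
   mv (eval_mat w) v \<in> region (hd w)"
proof (induction w)
  case Nil thus ?case by simp
next
  case (Cons l w)
  show ?case
  proof (cases "w = []")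
    case True thus ?thesis using Cons gen_maps by (simp add: mI_def[symmetric])
  next
    case False
    then obtain l' w' where w: "w = l' # w'" by (cases w) auto
    have red': "reduced w" and ne: "l' \<noteq> linv l" using Cons.prems w by auto
    have IH: "mv (eval_mat w) v \<in> region l'" using Cons.IH[OF red' False] Cons.prems w False by simp
    have "mv (eval_mat w) v \<in> pdom l \<or> mv (eval_mat w) v \<in> region l"
    proof (cases "fst l = fst l'")
      case True
      hence "l' = l" using ne by (cases l; cases l') auto
      thus ?thesis using IH by simp
    next
      case False thus ?thesis using IH region_sub by blast
    qed
    thus ?thesis using gen_maps by (simp add: mv_mmult)
  qed
qed

lemma witness_ex: "\<exists>v. v \<in> pdom l1 \<and> v \<notin> region l2"
proof (cases l1 rule: gen.cases)
  case 1 thus ?thesis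
  proof (cases l2 rule: gen.cases)
  qed (rule exI[of _ "(0,1)"]; simp; fail | rule exI[of _ "(-1,2)"]; simp; fail | rule exI[of _ "(1,2)"]; simp)+
next
  case 2 thus ?thesis
  proof (cases l2 rule: gen.cases)
  qed (rule exI[of _ "(0,1)"]; simp; fail | rule exI[of _ "(-1,2)"]; simp; fail | rule exI[of _ "(1,2)"]; simp)+
next
  case 3 thus ?thesis
  proof (cases l2 rule: gen.cases)
  qed (rule exI[of _ "(1,0)"]; simp; fail | rule exI[of _ "(2,-1)"]; simp; fail | rule exI[of _ "(2,1)"]; simp)+
next
  case 4 thus ?thesis
  proof (cases l2 rule: gen.cases)
  qed (rule exI[of _ "(1,0)"]; simp; fail | rule exI[of _ "(2,-1)"]; simp; fail | rule exI[of _ "(2,1)"]; simp)+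
qed

lemma reduced_not_I: assumes "reduced w" "w \<noteq> []" shows "eval_mat w \<noteq> mI"
proof
  assume I: "eval_mat w = mI"
  obtain v where v: "v \<in> pdom (last w)" "v \<notin> region (hd w)" using witness_ex by blast
  show False using pingpong[OF assms v(1)] v(2) I by simp
qed



lemma eval_I_H: assumes "eval_mat w = mI" shows "eval_H w = (0,0,0)"
proof -
  have "red w = []" using reduced_not_I[OF reduced_red] assms eval_mat_red by metis
  thus ?thesis using eval_H_red[of w] by simp
qed

lemma freeH: assumes "eval_mat w = eval_mat w'" shows "eval_H w = eval_H w'"
proof -
  have "eval_mat (winv w' @ w) = mI"
    using assms eval_mat_winv_left[of w'] by (simp add: eval_mat_append)
  hence 0: "hmult (eval_H (winv w')) (eval_H w) = (0,0,0)"
    using eval_I_H eval_H_append by metis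
  have "eval_H w = hmult (hmult (eval_H w') (eval_H (winv w'))) (eval_H w)"
    using eval_H_winv_right[of w'] by (simp add: eval_H_append)
  also have "\<dots> = eval_H w'" using 0 by (simp add: hmult_assoc)
  finally show ?thesis .
qed

fun invD :: "m2 \<Rightarrow> bool" where
  "invD (M a b c d) = (a mod 4 = 1 \<and> d mod 4 = 1 \<and> b mod 2 = 0 \<and> c mod 2 = 0 \<and> a*d - b*c = 1)"

lemma invD_eval: "invD (eval_mat w)"
proof (induction w)
  case Nil thus ?case by (simp add: mI_def)
next
  case (Cons l w)
  obtain a b c d where e: "eval_mat w = M a b c d" by (cases "eval_mat w") auto
  have h: "a mod 4 = 1" "d mod 4 = 1" "b mod 2 = 0" "c mod 2 = 0" "a*d - b*c = 1"
    using Cons e by auto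
  show ?case
  proof (cases l rule: gen.cases)
    case 1 thus ?thesis using e h by (simp add: algebra_simps) presburger
  next
    case 2 thus ?thesis using e h by (simp add: algebra_simps) presburger
  next
    case 3 thus ?thesis using e h by (simp add: algebra_simps) presburger
  next
    case 4 thus ?thesis using e h by (simp add: algebra_simps) presburger
  qed
qed

definition apw :: "int \<Rightarrow> letter list" where
  "apw m = (if m \<ge> 0 then replicate (nat m) (True,True) else replicate (nat (-m)) (True,False))"
definition bpw :: "int \<Rightarrow> letter list" where
  "bpw m = (if m \<ge> 0 then replicate (nat m) (False,True) else replicate (nat (-m)) (False,False))"
definition cpw :: "int \<Rightarrow> letter list" where
  "cpw m = (if m \<ge> 0 then concat (replicate (nat m) [(False,True),(True,False)])
            else concat (replicate (nat (-m)) [(True,True),(False,False)]))"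

definition cmat :: "int \<Rightarrow> m2" where
  "cmat m = (let s = (if even m then 1 else -1) in
      M (s*(1-2*m)) (s*(2*m)) (s*(-2*m)) (s*(1+2*m)))"

lemma rep_a1: "eval_mat (replicate k (True,True)) = M 1 (2*int k) 0 1 \<and> eval_H (replicate k (True,True)) = (int k,0,0)"
  by (induction k) (auto simp: mI_def)
lemma rep_a2: "eval_mat (replicate k (True,False)) = M 1 (-2*int k) 0 1 \<and> eval_H (replicate k (True,False)) = (- int k,0,0)"
  by (induction k) (auto simp: mI_def)
lemma rep_b1: "eval_mat (replicate k (False,True)) = M 1 0 (2*int k) 1 \<and> eval_H (replicate k (False,True)) = (0,int k,0)"
  by (induction k) (auto simp: mI_def)
lemma rep_b2: "eval_mat (replicate k (False,False)) = M 1 0 (-2*int k) 1 \<and> eval_H (replicate k (False,False)) = (0,- int k,0)"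
  by (induction k) (auto simp: mI_def)

lemma apw_eval: "eval_mat (apw m) = M 1 (2*m) 0 1" "eval_H (apw m) = (m,0,0)"
  using rep_a1[of "nat m"] rep_a2[of "nat (-m)"] by (auto simp: apw_def)
lemma bpw_eval: "eval_mat (bpw m) = M 1 0 (2*m) 1" "eval_H (bpw m) = (0,m,0)"
  using rep_b1[of "nat m"] rep_b2[of "nat (-m)"] by (auto simp: bpw_def)

lemma div2_step: "((x::int) + 2*k) div 2 = x div 2 + k" by simp

lemma rep_c1: "eval_mat (concat (replicate k [(False,True),(True,False)])) = cmat (int k) \<and>
   eval_H (concat (replicate k [(False,True),(True,False)])) = (- int k, int k, - (int k * (int k - 1) div 2))"
proof (induction k)
  case 0 thus ?case by (simp add: mI_def cmat_def)
next
  case (Suc k)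
  have "int (Suc k) * (int (Suc k) - 1) = int k * (int k - 1) + 2 * int k" by (simp add: algebra_simps)
  hence dv: "int (Suc k) * (int (Suc k) - 1) div 2 = int k * (int k - 1) div 2 + int k" by simp
  show ?case using Suc dv by (auto simp: cmat_def Let_def algebra_simps)
qed

lemma rep_c2: "eval_mat (concat (replicate k [(True,True),(False,False)])) = cmat (- int k) \<and>
   eval_H (concat (replicate k [(True,True),(False,False)])) = (int k, - int k, - (int k * (int k + 1) div 2))"
proof (induction k)
  case 0 thus ?case by (simp add: mI_def cmat_def)
next
  case (Suc k)
  have "int (Suc k) * (int (Suc k) + 1) = int k * (int k + 1) + 2 * (int k + 1)" by (simp add: algebra_simps)
  hence dv: "int (Suc k) * (int (Suc k) + 1) div 2 = int k * (int k + 1) div 2 + (int k + 1)" by simp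
  show ?case using Suc dv by (auto simp: cmat_def Let_def algebra_simps)
qed

lemma cpw_eval: "eval_mat (cpw m) = cmat m" "eval_H (cpw m) = (-m, m, - (m * (m - 1) div 2))"
proof -
  show "eval_mat (cpw m) = cmat m" using rep_c1[of "nat m"] rep_c2[of "nat (-m)"] by (auto simp: cpw_def)
  have "m < 0 \<Longrightarrow> m * (m - 1) = (-m) * (-m + 1)" by (simp add: algebra_simps)
  thus "eval_H (cpw m) = (-m, m, - (m * (m - 1) div 2))"
    using rep_c1[of "nat m"] rep_c2[of "nat (-m)"] by (auto simp: cpw_def)
qed



lemma stab_inf: assumes "invD g" "act g InfC = InfC" shows "\<exists>m. g = eval_mat (apw m)"
proof -
  obtain a b c d where g: "g = M a b c d" by (cases g) auto
  have c: "c = 0" using assms(2) g by (auto split: if_splits)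
  have h: "a mod 4 = 1" "b mod 2 = 0" "a*d = 1" using assms(1) g c by auto
  have "a = 1 \<and> d = 1 \<or> a = -1 \<and> d = -1" using h(3) zmult_eq_1_iff by blast
  hence "a = 1" "d = 1" using h(1) by auto
  moreover have "b = 2 * (b div 2)" using h(2) by presburger
  ultimately have "g = eval_mat (apw (b div 2))" using g c apw_eval(1) by simp
  thus ?thesis by blast
qed

lemma stab_0: assumes "invD g" "act g (Cusp 0) = Cusp 0" shows "\<exists>m. g = eval_mat (bpw m)"
proof -
  obtain a b c d where g: "g = M a b c d" by (cases g) auto
  have "d \<noteq> 0" "of_int b / of_int d = (0::rat)" using assms(2) g by (auto split: if_splits)
  hence b: "b = 0" by simp
  have h: "a mod 4 = 1" "c mod 2 = 0" "a*d = 1" using assms(1) g b by auto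
  have "a = 1 \<and> d = 1 \<or> a = -1 \<and> d = -1" using h(3) zmult_eq_1_iff by blast
  hence "a = 1" "d = 1" using h(1) by auto
  moreover have "c = 2 * (c div 2)" using h(2) by presburger
  ultimately have "g = eval_mat (bpw (c div 2))" using g b bpw_eval(1) by simp
  thus ?thesis by blast
qed

lemma stab_1: assumes "invD g" "act g (Cusp 1) = Cusp 1" shows "\<exists>m. g = eval_mat (cpw m)"
proof -
  obtain a b c d where g: "g = M a b c d" by (cases g) auto
  have ne: "of_int c + of_int d \<noteq> (0::rat)" and q: "(of_int a + of_int b) / (of_int c + of_int d) = (1::rat)"
    using assms(2) g by (auto split: if_splits)
  have "of_int a + of_int b = (of_int c + of_int d :: rat)" using ne q by (simp add: field_simps)
  hence u: "a + b = c + d" by (metis of_int_add of_int_eq_iff)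
  have h: "a mod 4 = 1" "a*d - b*c = 1" using assms(1) g by auto
  define u where "u = a + b"
  have bb: "b = c + d - a" using u by simp
  have "u * (a - c) = a*d - b*c" unfolding u_def bb by (simp add: algebra_simps)
  hence "u * (a - c) = 1" using h(2) by simp
  hence "u = 1 \<and> a - c = 1 \<or> u = -1 \<and> a - c = -1" using zmult_eq_1_iff by blast
  thus ?thesis
  proof
    assume "u = 1 \<and> a - c = 1"
    hence e: "b = 1 - a" "c = a - 1" "d = 2 - a" using u u_def by auto
    define m where "m = (1 - a) div 2"
    have m2: "2 * m = 1 - a" and ev: "even m" using h(1) unfolding m_def by presburger+
    have "g = cmat m" using g e m2 ev by (simp add: cmat_def Let_def algebra_simps)
    thus ?thesis using cpw_eval(1) by metis
  next
    assume "u = -1 \<and> a - c = -1"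
    hence e: "b = -1 - a" "c = a + 1" "d = -2 - a" using u u_def by auto
    define m where "m = (1 + a) div 2"
    have m2: "2 * m = 1 + a" and ev: "odd m" using h(1) unfolding m_def by presburger+
    have "g = cmat m" using g e m2 ev by (simp add: cmat_def Let_def algebra_simps)
    thus ?thesis using cpw_eval(1) by metis
  qed
qed



fun pt :: "int \<times> int \<Rightarrow> hpt" where
  "pt (p, r) = (if r = 0 then InfC else Cusp (of_int p / of_int r))"

lemma act_pt: assumes "v \<noteq> (0,0)" shows "act g (pt v) = pt (mv g v)"
proof -
  obtain a b c d where g: "g = M a b c d" by (cases g) auto
  obtain p r where v: "v = (p, r)" by fastforce
  show ?thesis
  proof (cases "r = 0")
    case True
    hence "p \<noteq> 0" using assms v by simp
    thus ?thesis using g v True by (simp add: field_simps)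
  next
    case False
    have e: "of_int c * (of_int p / of_int r) + of_int d = (of_int (c*p + d*r) / of_int r :: rat)"
      using False by (simp add: field_simps)
    have e2: "of_int a * (of_int p / of_int r) + of_int b = (of_int (a*p + b*r) / of_int r :: rat)"
      using False by (simp add: field_simps)
    show ?thesis using g v False e e2 by (simp del: of_int_add of_int_mult)
  qed
qed

lemma mv_nz: assumes "invD g" "v \<noteq> (0,0)" shows "mv g v \<noteq> (0,0)"
proof
  assume z: "mv g v = (0,0)"
  obtain a b c d where g: "g = M a b c d" by (cases g) auto
  obtain p r where v: "v = (p, r)" by fastforce
  have det: "a*d - b*c = 1" using assms(1) g by simp
  have 1: "a*p + b*r = 0" "c*p + d*r = 0" using z g v by auto
  have "p = (a*d - b*c) * p" using det by simp
  also have "\<dots> = d*(a*p + b*r) - b*(c*p + d*r)" by (simp add: algebra_simps)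
  finally have "p = 0" using 1 by simp
  have "r = (a*d - b*c) * r" using det by simp
  also have "\<dots> = a*(c*p + d*r) - c*(a*p + b*r)" by (simp add: algebra_simps)
  finally have "r = 0" using 1 by simp
  show False using `p = 0` `r = 0` v assms(2) by simp
qed

definition cuspset :: "hpt set" where "cuspset = range Cusp \<union> {InfC}"

lemma cusp_pt: assumes "x \<in> cuspset" shows "\<exists>v. v \<noteq> (0,0) \<and> x = pt v"
proof (cases x)
  case (Pt z) thus ?thesis using assms by (auto simp: cuspset_def)
next
  case (Cusp q)
  obtain p r where qr: "quotient_of q = (p, r)" by fastforce
  have "r > 0" using quotient_of_denom_pos[OF qr] .
  moreover have "q = of_int p / of_int r" using quotient_of_div[OF qr] .
  ultimately show ?thesis using Cusp by (intro exI[of _ "(p,r)"]) auto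
next
  case InfC thus ?thesis by (intro exI[of _ "(1,0)"]) simp
qed

lemma pt_cusp: "pt v \<in> cuspset" by (cases v) (auto simp: cuspset_def)

lemma act_cusp: "x \<in> cuspset \<Longrightarrow> act g x \<in> cuspset"
  using cusp_pt act_pt pt_cusp by metis

lemma act_comp: assumes "invD B" "x \<in> cuspset" shows "act (mmult A B) x = act A (act B x)"
proof -
  obtain v where v: "v \<noteq> (0,0)" "x = pt v" using cusp_pt[OF assms(2)] by blast
  have "act (mmult A B) x = pt (mv A (mv B v))" using v act_pt mv_mmult by metis
  also have "\<dots> = act A (pt (mv B v))" using act_pt mv_nz[OF assms(1) v(1)] by metis
  also have "\<dots> = act A (act B x)" using v act_pt by metis
  finally show ?thesis .
qed

lemma act_mI[simp]: "act mI x = x"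
  by (cases x) (auto simp: mI_def)

lemma orbit: "v \<noteq> (0,0) \<Longrightarrow> \<exists>w t. t \<noteq> (0,0) \<and> pt t \<in> {InfC, Cusp 0, Cusp 1} \<and> v = mv (eval_mat w) t"
proof (induction "nat (\<bar>fst v\<bar> + \<bar>snd v\<bar>)" arbitrary: v rule: less_induct)
  case less
  obtain p r where v: "v = (p, r)" by fastforce
  have step: "\<exists>w t. t \<noteq> (0,0) \<and> pt t \<in> {InfC, Cusp 0, Cusp 1} \<and> v = mv (eval_mat w) t"
    if h1: "v = mv (gen l) v'" and h2: "v' \<noteq> (0,0)" and h3: "\<bar>fst v'\<bar> + \<bar>snd v'\<bar> < \<bar>p\<bar> + \<bar>r\<bar>" for l v'
  proof -
    have "nat (\<bar>fst v'\<bar> + \<bar>snd v'\<bar>) < nat (\<bar>fst v\<bar> + \<bar>snd v\<bar>)" using h3 v by simp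
    then obtain w t where "t \<noteq> (0,0)" "pt t \<in> {InfC, Cusp 0, Cusp 1}" "v' = mv (eval_mat w) t"
      using less.hyps h2 by blast
    thus ?thesis using h1 by (intro exI[of _ "l # w"] exI[of _ t]) (simp add: mv_mmult)
  qed
  show ?case
  proof (cases "r = 0 \<or> p = 0 \<or> p = r")
    case True
    thus ?thesis using less.prems v by (intro exI[of _ "[]"] exI[of _ v]) (auto simp: mI_def)
  next
    case False
    hence nz: "r \<noteq> 0" "p \<noteq> 0" "p \<noteq> r" by auto
    show ?thesis
    proof (cases "p = -r")
      case True
      show ?thesis
        by (intro exI[of _ "[(True,False)]"] exI[of _ "(-p,-p)"]) (use True nz v in \<open>auto simp: mI_def\<close>)
    next
      case np: False
      show ?thesis
      proof (cases "\<bar>p\<bar> > \<bar>r\<bar>")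
        case True
        show ?thesis
        proof (cases "(p > 0) = (r > 0)")
          case True
          show ?thesis by (rule step[of "(True,True)" "(p - 2*r, r)"]) (use True `\<bar>p\<bar> > \<bar>r\<bar>` nz v in auto)
        next
          case False
          show ?thesis by (rule step[of "(True,False)" "(p + 2*r, r)"]) (use False `\<bar>p\<bar> > \<bar>r\<bar>` nz v in auto)
        qed
      next
        case False
        hence lt: "\<bar>r\<bar> > \<bar>p\<bar>" using nz np by auto
        show ?thesis
        proof (cases "(p > 0) = (r > 0)")
          case True
          show ?thesis by (rule step[of "(False,True)" "(p, r - 2*p)"]) (use True lt nz v in auto)
        next
          case False
          show ?thesis by (rule step[of "(False,False)" "(p, r + 2*p)"]) (use False lt nz v in auto)
        qed
      qed
    qed
  qed
qed



definition x0 :: "nat \<Rightarrow> hpt" where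
  "x0 k = (if k = 0 then InfC else if k = 1 then Cusp 0 else Cusp 1)"

definition pw :: "nat \<Rightarrow> int \<Rightarrow> letter list" where
  "pw k = (if k = 0 then apw else if k = 1 then bpw else cpw)"

definition Hform :: "nat \<Rightarrow> int \<Rightarrow> int \<Rightarrow> int \<Rightarrow> int \<times> int \<times> int" where
  "Hform k hx hy m = (if k = 0 then (m, 0, - m*hy) else if k = 1 then (0, m, hx*m)
      else (-m, m, - (m * (m - 1) div 2) + hx*m + m*hy))"

lemma conjH: assumes "hmult (x,y,z) (x',y',z') = (0,0,0)"
  shows "hmult (hmult (x,y,z) (X,Y,Z)) (x',y',z') = (X, Y, Z + x*Y - X*y)"
proof -
  have 1: "x' = -x" "y' = -y" using assms by auto
  have "z + z' + x*y' = 0" using assms by auto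
  hence "z' = -z + x*y" using 1 by simp
  thus ?thesis using 1 by (simp add: algebra_simps)
qed

lemma x0_cusp: "x0 k \<in> cuspset" by (simp add: x0_def cuspset_def)

lemma stabH: assumes "x \<in> cuspset"
  shows "\<exists>wh k hx hy. k < 3 \<and> x = act (eval_mat wh) (x0 k) \<and>
    (\<forall>wg. act (eval_mat wg) x = x \<longrightarrow> (\<exists>m. eval_H wg = Hform k hx hy m))"
proof -
  obtain v where v: "v \<noteq> (0,0)" "x = pt v" using cusp_pt[OF assms] by blast
  obtain wh t where t: "t \<noteq> (0,0)" "pt t \<in> {InfC, Cusp 0, Cusp 1}" "v = mv (eval_mat wh) t"
    using orbit[OF v(1)] by blast
  obtain k where k: "k < 3" "pt t = x0 k"
  proof -
    consider "pt t = InfC" | "pt t = Cusp 0" | "pt t = Cusp 1" using t(2) by blast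
    thus ?thesis
    proof cases
      case 1 thus ?thesis using that[of 0] by (simp add: x0_def)
    next
      case 2 thus ?thesis using that[of 1] by (simp add: x0_def)
    next
      case 3 thus ?thesis using that[of 2] by (simp add: x0_def)
    qed
  qed
  have xe: "x = act (eval_mat wh) (x0 k)" using v t k act_pt by metis
  obtain hx hy hz where hh: "eval_H wh = (hx, hy, hz)" by (cases "eval_H wh") auto
  obtain ix iy iz where hi: "eval_H (winv wh) = (ix, iy, iz)" by (cases "eval_H (winv wh)") auto
  have inv0: "hmult (hx,hy,hz) (ix,iy,iz) = (0,0,0)" using eval_H_winv_right[of wh] hh hi
    by (simp add: eval_H_append)
  have "\<forall>wg. act (eval_mat wg) x = x \<longrightarrow> (\<exists>m. eval_H wg = Hform k hx hy m)"
  proof (intro allI impI)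
    fix wg assume fx: "act (eval_mat wg) x = x"
    define kw where "kw = winv wh @ wg @ wh"
    have "act (eval_mat kw) (x0 k) =
          act (eval_mat (winv wh)) (act (eval_mat wg) (act (eval_mat wh) (x0 k)))"
    proof -
      have invB: "invD (mmult (eval_mat wg) (eval_mat wh))"
        using invD_eval[of "wg @ wh"] by (simp add: eval_mat_append)
      show ?thesis unfolding kw_def eval_mat_append
        by (simp only: act_comp[OF invB x0_cusp] act_comp[OF invD_eval x0_cusp])
    qed
    also have "\<dots> = act (eval_mat (winv wh)) (act (eval_mat wh) (x0 k))" using fx xe by simp
    also have "\<dots> = act (eval_mat (winv wh @ wh)) (x0 k)"
      unfolding eval_mat_append by (simp only: act_comp[OF invD_eval x0_cusp])
    also have "\<dots> = x0 k" by (simp add: eval_mat_winv_left)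
    finally have fk: "act (eval_mat kw) (x0 k) = x0 k" .
    have "\<exists>m. eval_mat kw = eval_mat (pw k m)"
      using stab_inf[OF invD_eval] stab_0[OF invD_eval] stab_1[OF invD_eval] fk k(1)
      by (auto simp: x0_def pw_def)
    then obtain m where m: "eval_mat kw = eval_mat (pw k m)" by blast
    have Hk: "eval_H kw = eval_H (pw k m)" using freeH[OF m] .
    have "eval_mat (wh @ kw @ winv wh) =
       mmult (mmult (eval_mat (wh @ winv wh)) (eval_mat wg)) (eval_mat (wh @ winv wh))"
      unfolding kw_def eval_mat_append by (simp add: mmult_assoc)
    hence "eval_mat (wh @ kw @ winv wh) = eval_mat wg" by (simp add: eval_mat_winv_right)
    hence "eval_H wg = eval_H (wh @ kw @ winv wh)" using freeH by metis
    also have "\<dots> = hmult (hmult (hx,hy,hz) (eval_H (pw k m))) (ix,iy,iz)"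
      using Hk hh hi by (simp add: eval_H_append hmult_assoc)
    also have "\<dots> = Hform k hx hy m"
    proof -
      obtain X Y Z where "eval_H (pw k m) = (X,Y,Z)" by (cases "eval_H (pw k m)") auto
      moreover have "eval_H (pw k m) = (if k = 0 then (m,0,0) else if k = 1 then (0,m,0)
              else (-m, m, - (m * (m - 1) div 2)))"
        by (simp add: pw_def apw_eval bpw_eval cpw_eval)
      ultimately show ?thesis using conjH[OF inv0, of X Y Z]
        by (auto simp: Hform_def algebra_simps split: if_splits)
    qed
    finally show "\<exists>m. eval_H wg = Hform k hx hy m" by blast
  qed
  thus ?thesis using k xe by blast
qed



lemma interior_stab: assumes "invD g" "Im z > 0" "act g (Pt z) = Pt z" shows "g = mI"
proof -
  obtain a b c d where g: "g = M a b c d" by (cases g) auto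
  have h: "a mod 4 = 1" "d mod 4 = 1" "a*d - b*c = 1" using assms(1) g by auto
  have eq: "(of_int a * z + of_int b) / (of_int c * z + of_int d) = z" using assms(3) g by simp
  have den: "of_int c * z + of_int d \<noteq> 0"
  proof
    assume z0: "of_int c * z + of_int d = 0"
    hence "Im (of_int c * z + of_int d) = 0" by simp
    hence "c = 0" using assms(2) by simp
    moreover have "Re (of_int c * z + of_int d) = 0" using z0 by simp
    ultimately have "d = 0" by simp
    thus False using h(3) `c = 0` by simp
  qed
  have eq2: "of_int a * z + of_int b = z * (of_int c * z + of_int d)" using eq den
    by (simp add: field_simps)
  define x where "x = Re z"
  define y where "y = Im z"
  have y0: "y > 0" using assms(2) y_def by simp
  have re: "a * x + b = c * (x^2 - y^2) + d * x"
    using arg_cong[OF eq2, of Re] unfolding x_def y_def by (simp add: power2_eq_square algebra_simps)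
  have im: "a * y = 2 * c * x * y + d * y"
    using arg_cong[OF eq2, of Im] unfolding x_def y_def by (simp add: power2_eq_square algebra_simps)
  have ad: "real_of_int a = 2 * c * x + d" using im y0
    by (metis (no_types, lifting) distrib_right mult.commute mult_cancel_left less_irrefl)
  have bb: "real_of_int b = - c * x^2 - c * y^2" using re ad by (simp add: algebra_simps power2_eq_square)
  have detr: "real_of_int a * d - real_of_int b * c = 1" using h(3) by (metis of_int_1 of_int_diff of_int_mult)
  have s1: "(real_of_int a + d)^2 = (real_of_int a - d)^2 + 4*(real_of_int a * d - real_of_int b * c) + 4*b*c"
    by (simp add: algebra_simps power2_eq_square)
  have s2: "real_of_int a - d = 2 * c * x" using ad by simp
  have sq: "(real_of_int a + d)^2 = 4 - 4 * c^2 * y^2"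
    unfolding s1 s2 detr by (simp add: bb algebra_simps power2_eq_square)
  have c0: "c = 0"
  proof (rule ccontr)
    assume "c \<noteq> 0"
    hence "0 < c^2" by simp
    hence "1 \<le> c^2" by linarith
    hence c1: "real_of_int c ^2 \<ge> 1" by (metis of_int_1_le_iff of_int_power)
    have y2: "y^2 > 0" using y0 by simp
    have "c^2 * y^2 > 0" using c1 y2 `c \<noteq> 0` by (intro mult_pos_pos) simp_all
    hence "(real_of_int a + d)^2 < 4" using sq by linarith
    hence lt4: "(a + d)^2 < 4" by (metis of_int_add of_int_less_iff of_int_numeral of_int_power)
    have "\<bar>a + d\<bar> < 2"
    proof (rule ccontr)
      assume "\<not> \<bar>a + d\<bar> < 2"
      hence "2 \<le> \<bar>a + d\<bar>" by simp
      hence "2^2 \<le> \<bar>a + d\<bar>^2" by (rule power_mono) simp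
      thus False using lt4 by simp
    qed
    thus False using h(1,2) by presburger
  qed
  hence "a = d" "b = 0" using ad bb by simp_all
  hence "a * a = 1" using h(3) by simp
  hence "a = 1" using h(1) zmult_eq_1_iff by force
  thus ?thesis using g `a = d` `b = 0` c0 by (simp add: mI_def)
qed



definition phic :: "nat \<Rightarrow> int \<times> int \<times> int \<Rightarrow> bool" where
  "phic n h = (case h of (x, y, z) \<Rightarrow> int n dvd x \<and> int n dvd y \<and> int n dvd z)"
definition psic :: "nat \<Rightarrow> int \<times> int \<times> int \<Rightarrow> bool" where
  "psic n h = (case h of (x, y, z) \<Rightarrow> int n dvd x \<and> int n dvd y)"

lemma ker_phi_alt: "ker_phi n = {eval_mat w | w. phic n (eval_H w)}"
  unfolding ker_phi_def phic_def by (simp add: dvd_eq_mod_eq_0)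
lemma ker_psi_alt: "ker_psi n = {eval_mat w | w. psic n (eval_H w)}"
  unfolding ker_psi_def psic_def by (simp add: dvd_eq_mod_eq_0)

lemma ker_phi_iff: "eval_mat w \<in> ker_phi n \<longleftrightarrow> phic n (eval_H w)"
proof
  assume "eval_mat w \<in> ker_phi n"
  then obtain w' where "eval_mat w = eval_mat w'" "phic n (eval_H w')" unfolding ker_phi_alt by blast
  thus "phic n (eval_H w)" using freeH by metis
qed (auto simp: ker_phi_alt)
lemma ker_psi_iff: "eval_mat w \<in> ker_psi n \<longleftrightarrow> psic n (eval_H w)"
proof
  assume "eval_mat w \<in> ker_psi n"
  then obtain w' where "eval_mat w = eval_mat w'" "psic n (eval_H w')" unfolding ker_psi_alt by blast
  thus "psic n (eval_H w)" using freeH by metis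
qed (auto simp: ker_psi_alt)
lemma ker_phi_word: "g \<in> ker_phi n \<Longrightarrow> \<exists>w. g = eval_mat w"
  unfolding ker_phi_alt by blast
lemma ker_psi_word: "g \<in> ker_psi n \<Longrightarrow> \<exists>w. g = eval_mat w"
  unfolding ker_psi_alt by blast

lemma S1_mult: assumes "s \<in> stab (ker_phi n) x" "t \<in> stab (ker_phi n) x" "x \<in> cuspset"
  shows "mmult s t \<in> stab (ker_phi n) x"
proof -
  obtain ws wt where w: "s = eval_mat ws" "t = eval_mat wt"
    using assms ker_phi_word unfolding stab_def by blast
  have p: "phic n (eval_H ws)" "phic n (eval_H wt)" using assms w ker_phi_iff unfolding stab_def by auto
  have "phic n (eval_H (ws @ wt))" using p unfolding eval_H_append phic_def
    by (cases "eval_H ws"; cases "eval_H wt") auto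
  hence "mmult s t \<in> ker_phi n" using ker_phi_iff w eval_mat_append by metis
  moreover have "act (mmult s t) x = x"
  proof -
    have "act (mmult s t) x = act s (act t x)" using act_comp[OF invD_eval assms(3)] w by simp
    thus ?thesis using assms(1,2) unfolding stab_def by simp
  qed
  ultimately show ?thesis unfolding stab_def by simp
qed

lemma S1_inv: assumes "s \<in> stab (ker_phi n) x" "x \<in> cuspset"
  shows "\<exists>s'. s' \<in> stab (ker_phi n) x \<and> mmult s s' = mI"
proof -
  obtain ws where w: "s = eval_mat ws" using assms ker_phi_word unfolding stab_def by blast
  have p: "phic n (eval_H ws)" using assms w ker_phi_iff unfolding stab_def by auto
  obtain a b c where h: "eval_H ws = (a,b,c)" by (cases "eval_H ws") auto
  obtain a' b' c' where h': "eval_H (winv ws) = (a',b',c')" by (cases "eval_H (winv ws)") auto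
  have "hmult (a,b,c) (a',b',c') = (0,0,0)" using eval_H_winv_right[of ws] h h'
    by (simp add: eval_H_append)
  hence e1: "a' = -a" "b' = -b" by auto
  have "c + c' + a*b' = 0" using `hmult (a,b,c) (a',b',c') = (0,0,0)` by auto
  hence e: "a' = -a" "b' = -b" "c' = -c + a*b" using e1 by simp_all
  have "phic n (eval_H (winv ws))" using p h h' e unfolding phic_def by auto
  hence k: "eval_mat (winv ws) \<in> ker_phi n" using ker_phi_iff by metis
  have fx: "act s x = x" using assms(1) unfolding stab_def by simp
  have "act (eval_mat (winv ws)) x = act (eval_mat (winv ws)) (act s x)" using fx by simp
  also have "\<dots> = act (eval_mat (winv ws @ ws)) x"
    using act_comp[OF invD_eval assms(2)] w by (simp add: eval_mat_append)
  also have "\<dots> = x" by (simp add: eval_mat_winv_left)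
  finally have "eval_mat (winv ws) \<in> stab (ker_phi n) x" using k unfolding stab_def by simp
  moreover have "mmult s (eval_mat (winv ws)) = mI" using w eval_mat_winv_right eval_mat_append by metis
  ultimately show ?thesis by blast
qed

lemma S1_coset: assumes "s \<in> stab (ker_phi n) x" "x \<in> cuspset"
  shows "mmult s ` stab (ker_phi n) x = stab (ker_phi n) x"
proof
  show "mmult s ` stab (ker_phi n) x \<subseteq> stab (ker_phi n) x" using S1_mult[OF assms(1) _ assms(2)] by blast
  show "stab (ker_phi n) x \<subseteq> mmult s ` stab (ker_phi n) x"
  proof
    fix t assume t: "t \<in> stab (ker_phi n) x"
    obtain s' where s': "s' \<in> stab (ker_phi n) x" "mmult s s' = mI" using S1_inv assms by blast
    have "t = mmult s (mmult s' t)" using s'(2) by (simp add: mmult_assoc[symmetric])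
    moreover have "mmult s' t \<in> stab (ker_phi n) x" using S1_mult[OF s'(1) t assms(2)] .
    ultimately show "t \<in> mmult s ` stab (ker_phi n) x" by blast
  qed
qed

lemma coset_shift: assumes "s \<in> stab (ker_phi n) x" "x \<in> cuspset"
  shows "mmult (mmult g s) ` stab (ker_phi n) x = mmult g ` stab (ker_phi n) x"
proof -
  have "mmult (mmult g s) ` stab (ker_phi n) x = mmult g ` (mmult s ` stab (ker_phi n) x)"
    by (simp add: image_image mmult_assoc)
  thus ?thesis using S1_coset[OF assms] by simp
qed



definition HH :: "m2 \<Rightarrow> int \<times> int \<times> int" where
  "HH g = eval_H (SOME w. eval_mat w = g)"

lemma HH_eval: "HH (eval_mat w) = eval_H w"
proof -
  have "eval_mat (SOME w'. eval_mat w' = eval_mat w) = eval_mat w" by (rule someI) (rule refl)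
  thus ?thesis unfolding HH_def using freeH by metis
qed

lemma card_le2: assumes "R \<subseteq> {A, B}" shows "finite R \<and> card R \<le> 2"
proof -
  have f: "finite R" by (rule finite_subset[OF assms]) simp
  have "card R \<le> card {A, B}" by (rule card_mono) (simp_all add: assms)
  also have "card {A, B} \<le> 2" by (simp add: card_insert_if)
  finally show ?thesis using f by simp
qed

lemma card_le1: assumes "R \<subseteq> {A}" shows "finite R \<and> card R \<le> 1"
proof -
  have f: "finite R" by (rule finite_subset[OF assms]) simp
  have "card R \<le> card {A}" by (rule card_mono) (simp_all add: assms)
  thus ?thesis using f by simp
qed

lemma arith_par: assumes "n > 0" "int n dvd m" "int n dvd m'" "(m div int n) mod 2 = (m' div int n) mod 2"
  shows "\<exists>t. m' - m = 2 * int n * t"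
proof -
  obtain j where j: "m = int n * j" using assms(2) by (auto elim: dvdE)
  obtain j' where j': "m' = int n * j'" using assms(3) by (auto elim: dvdE)
  have "m div int n = j" "m' div int n = j'" using j j' assms(1) by simp_all
  hence "j mod 2 = j' mod 2" using assms(4) by simp
  hence "2 dvd (j' - j)" by presburger
  then obtain t where "j' - j = 2 * t" by (rule dvdE)
  hence "m' - m = 2 * int n * t" using j j' by (simp add: algebra_simps)
  thus ?thesis by blast
qed

lemma phic_Hform2: assumes "m'' = 2 * int n * t" shows "phic n (Hform 2 hx hy m'')"
proof -
  have "m'' * (m'' - 1) = 2 * (int n * t * (2 * int n * t - 1))" using assms by (simp add: algebra_simps)
  hence d: "m'' * (m'' - 1) div 2 = int n * (t * (2 * int n * t - 1))" by simp
  have "int n dvd (- (m'' * (m'' - 1) div 2) + hx*m'' + m''*hy)"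
    unfolding d using assms by simp
  thus ?thesis using assms unfolding phic_def Hform_def by simp
qed

lemma Hinv: "eval_H (winv w) = (case eval_H w of (a, b, c) \<Rightarrow> (-a, -b, -c + a*b))"
proof -
  obtain a b c where h: "eval_H w = (a,b,c)" by (cases "eval_H w") auto
  obtain a' b' c' where h': "eval_H (winv w) = (a',b',c')" by (cases "eval_H (winv w)") auto
  have 0: "hmult (a,b,c) (a',b',c') = (0,0,0)" using eval_H_winv_right[of w] h h'
    by (simp add: eval_H_append)
  hence e1: "a' = -a" "b' = -b" by auto
  have "c + c' + a*b' = 0" using 0 by auto
  hence "c' = -c + a*b" using e1 by simp
  thus ?thesis using h h' e1 by simp
qed

lemma S2_info: assumes "g \<in> stab (ker_psi n) x"
    "\<forall>wg. act (eval_mat wg) x = x \<longrightarrow> (\<exists>m. eval_H wg = Hform k hx hy m)"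
  shows "\<exists>w m. g = eval_mat w \<and> eval_H w = Hform k hx hy m \<and> psic n (eval_H w) \<and> act g x = x"
proof -
  have g: "g \<in> ker_psi n" "act g x = x" using assms(1) unfolding stab_def by auto
  obtain w where w: "g = eval_mat w" using ker_psi_word[OF g(1)] by blast
  have p: "psic n (eval_H w)" using g(1) unfolding w ker_psi_iff .
  obtain m where "eval_H w = Hform k hx hy m" using assms(2) g(2) w by blast
  thus ?thesis using w p g(2) by blast
qed

lemma cusp_case: assumes "x \<in> cuspset" "n > 0"
  shows "finite (ram_cosets (ker_phi n) (ker_psi n) x) \<and> card (ram_cosets (ker_phi n) (ker_psi n) x) \<le> 2
   \<and> (card (ram_cosets (ker_phi n) (ker_psi n) x) > 1 \<longrightarrow> x \<in> Fermat_Z0_cusps)"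
proof -
  obtain wh k hx hy where k: "k < 3" "x = act (eval_mat wh) (x0 k)"
     and st: "\<forall>wg. act (eval_mat wg) x = x \<longrightarrow> (\<exists>m. eval_H wg = Hform k hx hy m)"
    using stabH[OF assms(1)] by blast
  define S1 where "S1 = stab (ker_phi n) x"
  define S2 where "S2 = stab (ker_psi n) x"
  have R: "ram_cosets (ker_phi n) (ker_psi n) x = {mmult g ` S1 | g. g \<in> S2}"
    by (simp add: ram_cosets_def S1_def S2_def)
  show ?thesis
  proof (cases "k = 2")
    case False
    have sub: "S2 \<subseteq> S1"
    proof
      fix g assume "g \<in> S2"
      then obtain w m where w: "g = eval_mat w" "eval_H w = Hform k hx hy m" "psic n (eval_H w)" "act g x = x"
        using S2_info st unfolding S2_def by blast
      have "k = 0 \<or> k = 1" using False k(1) by auto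
      hence "phic n (eval_H w)" using w(2,3) by (auto simp: Hform_def psic_def phic_def)
      hence "g \<in> ker_phi n" unfolding w(1) ker_phi_iff .
      thus "g \<in> S1" using w(4) by (simp add: stab_def S1_def)
    qed
    have "ram_cosets (ker_phi n) (ker_psi n) x \<subseteq> {S1}"
    proof
      fix C assume "C \<in> ram_cosets (ker_phi n) (ker_psi n) x"
      then obtain g where g: "g \<in> S2" "C = mmult g ` S1" using R by blast
      have "g \<in> stab (ker_phi n) x" using sub g(1) S1_def by blast
      hence "C = S1" using S1_coset[OF _ assms(1)] g(2) S1_def by simp
      thus "C \<in> {S1}" by simp
    qed
    from card_le1[OF this] show ?thesis by linarith
  next
    case True
    have Z: "x \<in> Fermat_Z0_cusps" using k True by (auto simp: Fermat_Z0_cusps_def Delta_def x0_def)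
    define par where "par g = (fst (snd (HH g)) div int n) mod 2" for g
    have key: "mmult g ` S1 = mmult g' ` S1" if gg: "g \<in> S2" "g' \<in> S2" "par g = par g'" for g g'
    proof -
      obtain w m where w: "g = eval_mat w" "eval_H w = Hform k hx hy m" "psic n (eval_H w)" "act g x = x"
        using S2_info[OF _ st] gg(1) unfolding S2_def by blast
      obtain w' m' where w': "g' = eval_mat w'" "eval_H w' = Hform k hx hy m'" "psic n (eval_H w')" "act g' x = x"
        using S2_info[OF _ st] gg(2) unfolding S2_def by blast
      have pm: "par g = (m div int n) mod 2" using w(1,2) True unfolding par_def by (simp add: HH_eval Hform_def)
      have pm': "par g' = (m' div int n) mod 2" using w'(1,2) True unfolding par_def by (simp add: HH_eval Hform_def)
      have dm: "int n dvd m" using w(2,3) True by (simp add: Hform_def psic_def)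
      have dm': "int n dvd m'" using w'(2,3) True by (simp add: Hform_def psic_def)
      obtain t where t: "m' - m = 2 * int n * t" using arith_par[OF assms(2) dm dm'] pm pm' gg(3) by auto
      define ws where "ws = winv w @ w'"
      have gs: "mmult g (eval_mat ws) = g'"
      proof -
        have "mmult g (eval_mat ws) = eval_mat ((w @ winv w) @ w')" unfolding ws_def w(1) by (simp add: eval_mat_append)
        also have "\<dots> = mmult (eval_mat (w @ winv w)) (eval_mat w')" by (rule eval_mat_append)
        also have "\<dots> = g'" using w'(1) by (simp add: eval_mat_winv_right)
        finally show ?thesis .
      qed
      have fs: "act (eval_mat ws) x = x"
      proof -
        have "act (eval_mat ws) x = act (eval_mat (winv w)) (act g' x)"
          unfolding ws_def eval_mat_append w'(1) by (rule act_comp[OF invD_eval assms(1)])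
        also have "\<dots> = act (eval_mat (winv w)) (act g x)" using w(4) w'(4) by simp
        also have "\<dots> = act (eval_mat (winv w @ w)) x"
          unfolding eval_mat_append w(1) by (rule act_comp[OF invD_eval assms(1), symmetric])
        also have "\<dots> = x" by (simp add: eval_mat_winv_left)
        finally show ?thesis .
      qed
      obtain m'' where m'': "eval_H ws = Hform k hx hy m''" using st fs by blast
      have "eval_H ws = hmult (eval_H (winv w)) (eval_H w')" unfolding ws_def by (simp add: eval_H_append)
      hence "fst (snd (eval_H ws)) = m' - m" using w(2) w'(2) True by (simp add: Hinv Hform_def)
      hence "m'' = m' - m" using m'' True by (simp add: Hform_def)
      hence "phic n (eval_H ws)" using m'' phic_Hform2 t True by simp
      hence "eval_mat ws \<in> ker_phi n" unfolding ker_phi_iff .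
      hence sS: "eval_mat ws \<in> stab (ker_phi n) x" using fs by (simp add: stab_def)
      show ?thesis using coset_shift[OF sS assms(1), of g] gs S1_def by simp
    qed
    have mI2: "mI \<in> S2"
    proof -
      have "eval_mat [] \<in> ker_psi n" unfolding ker_psi_iff by (simp add: psic_def)
      thus ?thesis by (simp add: S2_def stab_def)
    qed
    have parI: "par mI = 0" using HH_eval[of "[]"] unfolding par_def by simp
    define e where "e = (SOME e. e \<in> S2 \<and> par e = 1)"
    have "ram_cosets (ker_phi n) (ker_psi n) x \<subseteq> {mmult mI ` S1, mmult e ` S1}"
    proof
      fix C assume "C \<in> ram_cosets (ker_phi n) (ker_psi n) x"
      then obtain g where g: "g \<in> S2" "C = mmult g ` S1" using R by blast
      have "par g = 0 \<or> par g = 1" unfolding par_def by auto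
      thus "C \<in> {mmult mI ` S1, mmult e ` S1}"
      proof
        assume "par g = 0" thus ?thesis using key[OF g(1) mI2] parI g(2) by simp
      next
        assume p1: "par g = 1"
        have "e \<in> S2 \<and> par e = 1" unfolding e_def by (rule someI[of _ g]) (use g(1) p1 in simp)
        thus ?thesis using key[OF g(1)] p1 g(2) by simp
      qed
    qed
    from card_le2[OF this] show ?thesis using Z by blast
  qed
qed

theorem lemma5p2:
  fixes n :: nat
  assumes "n \<ge> 2" and "even n"
  shows "\<forall>x \<in> Hstar.
           finite (ram_cosets (ker_phi n) (ker_psi n) x)
         \<and> ram_index (ker_phi n) (ker_psi n) x \<le> 2
         \<and> (ram_index (ker_phi n) (ker_psi n) x > 1 \<longrightarrow> x \<in> Fermat_Z0_cusps)"
proof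
  fix x assume x: "x \<in> Hstar"
  have n: "n > 0" using assms(1) by simp
  show "finite (ram_cosets (ker_phi n) (ker_psi n) x)
         \<and> ram_index (ker_phi n) (ker_psi n) x \<le> 2
         \<and> (ram_index (ker_phi n) (ker_psi n) x > 1 \<longrightarrow> x \<in> Fermat_Z0_cusps)"
  proof (cases "x \<in> cuspset")
    case True thus ?thesis using cusp_case[OF True n] unfolding ram_index_def by blast
  next
    case False
    then obtain z where z: "x = Pt z" "Im z > 0" using x by (auto simp: Hstar_def cuspset_def)
    have sub: "stab (ker_psi n) x \<subseteq> {mI}"
    proof
      fix g assume g: "g \<in> stab (ker_psi n) x"
      obtain w where w: "g = eval_mat w" using ker_psi_word g unfolding stab_def by blast
      have "act g (Pt z) = Pt z" using g z(1) unfolding stab_def by simp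
      hence "g = mI" using interior_stab[OF _ z(2)] invD_eval w by blast
      thus "g \<in> {mI}" by simp
    qed
    have "ram_cosets (ker_phi n) (ker_psi n) x \<subseteq> {mmult mI ` stab (ker_phi n) x}"
      unfolding ram_cosets_def using sub by blast
    from card_le1[OF this] show ?thesis unfolding ram_index_def by linarith
  qed
qed


end
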